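(* Let $Z_1,Z_2,Z_3$ be independent random variables and let $p\ge2$ be an integer. Then $$\mathbf E|Z_1+Z_2+Z_3|^p\le \mathbf E|Z_1|^p+\mathbf E|Z_2|^p+\big(\|Z_1\|_{p-1}+\|Z_2\|_{p-1}+\|Z_3\|_p\big)^p.$$
   Context: $\|Z\|_q:=(\mathbf E|Z|^q)^{1/q}$ denotes the $L^q$ norm. *)

theory Defs
  imports "HOL-Probability.Probability"
begin

definition abs_moment :: "'a measure \<Rightarrow> nat \<Rightarrow> ('a \<Rightarrow> real) \<Rightarrow> ennreal" where
  "abs_moment M q Z = (\<integral>\<^sup>+ x. ennreal (\<bar>Z x\<bar> ^ q) \<partial>M)"

definition Lq_norm :: "'a measure \<Rightarrow> nat \<Rightarrow> ('a \<Rightarrow> real) \<Rightarrow> ennreal" where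
  "Lq_norm M q Z = (if abs_moment M q Z = \<infinity> then \<infinity>
     else ennreal (enn2real (abs_moment M q Z) powr (1 / real q)))"

end

theory Submission
  imports Defs
begin

lemma young_pt:
  fixes t s :: real and i q :: nat
  assumes t: "t \<ge> 0" and s: "s > 0" and i: "0 < i" "i \<le> q"
  shows "t ^ i \<le> (real i / real q) * (t ^ q / s ^ q) * s ^ i + (1 - real i / real q) * s ^ i"
proof (cases "t = 0")
  case True
  have "real i / real q \<le> 1" using i by simp
  then show ?thesis using True i s by (simp add: zero_power)
next
  case False
  define u where "u = t / s"
  have u: "u > 0" using False t s by (simp add: u_def)
  have q: "q > 0" using i by simp
  have "(u ^ q) powr (real i / real q) * 1 powr (1 - real i / real q)
      \<le> (real i / real q) * u ^ q + (1 - real i / real q) * 1"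
    by (rule Youngs_inequality_0) (use i u q in auto)
  moreover have "(u ^ q) powr (real i / real q) = u ^ i"
    using u q by (simp add: powr_realpow[symmetric] powr_powr)
  ultimately have "u ^ i \<le> (real i / real q) * u ^ q + (1 - real i / real q)" by simp
  then have "u ^ i * s ^ i \<le> ((real i / real q) * u ^ q + (1 - real i / real q)) * s ^ i"
    using s by (intro mult_right_mono) auto
  moreover have "u ^ i * s ^ i = t ^ i" using s by (simp add: u_def power_divide)
  moreover have "u ^ q = t ^ q / s ^ q" by (simp add: u_def power_divide)
  ultimately show ?thesis by (simp add: algebra_simps)
qed

lemma lyap:
  assumes P: "prob_space M" and Zm: "Z \<in> borel_measurable M" and iq: "i \<le> q" and q: "q > 0"
  shows "abs_moment M i Z \<le> Lq_norm M q Z ^ i"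
proof (cases "i = 0")
  case True
  interpret prob_space M by (rule P)
  show ?thesis using True by (simp add: abs_moment_def emeasure_space_1)
next
  case False
  interpret prob_space M by (rule P)
  show ?thesis
  proof (cases "abs_moment M q Z = \<infinity>")
    case True
    then show ?thesis using False by (simp add: Lq_norm_def)
  next
    case inf: False
    define r where "r = enn2real (abs_moment M q Z)"
    have r0: "r \<ge> 0" by (simp add: r_def)
    have mr: "abs_moment M q Z = ennreal r"
      using inf by (simp add: r_def ennreal_enn2real_if)
    have L: "Lq_norm M q Z = ennreal (r powr (1 / real q))"
      using inf by (simp add: Lq_norm_def r_def)
    show ?thesis
    proof (cases "r = 0")
      case True
      have "AE x in M. ennreal (\<bar>Z x\<bar> ^ q) = 0"
        using mr True Zm by (subst nn_integral_0_iff_AE[symmetric]) (auto simp: abs_moment_def)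
      then have "AE x in M. ennreal (\<bar>Z x\<bar> ^ i) = 0"
        by eventually_elim (use q False in auto)
      then have "abs_moment M i Z = 0"
        unfolding abs_moment_def by (subst nn_integral_cong_AE[where v="\<lambda>_. 0"]) auto
      then show ?thesis by simp
    next
      case rpos: False
      define s where "s = r powr (1 / real q)"
      have s: "s > 0" using r0 rpos by (simp add: s_def)
      have sq: "s ^ q = r" using r0 rpos q
        by (simp add: s_def powr_realpow[symmetric] powr_powr)
      define c1 where "c1 = (real i / real q) * (1 / s ^ q) * s ^ i"
      define c2 where "c2 = (1 - real i / real q) * s ^ i"
      have c1: "c1 \<ge> 0" using s by (simp add: c1_def)
      have "real i / real q \<le> 1" using iq q by simp
      then have c2: "c2 \<ge> 0" using s by (simp add: c2_def)
      have "abs_moment M i Z \<le> (\<integral>\<^sup>+ x. ennreal c1 * ennreal (\<bar>Z x\<bar> ^ q) + ennreal c2 \<partial>M)"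
        unfolding abs_moment_def
      proof (intro nn_integral_mono)
        fix x
        have "\<bar>Z x\<bar> ^ i \<le> c1 * \<bar>Z x\<bar> ^ q + c2"
          using young_pt[of "\<bar>Z x\<bar>" s i q] s False iq
          by (simp add: c1_def c2_def algebra_simps)
        show "ennreal (\<bar>Z x\<bar> ^ i) \<le> ennreal c1 * ennreal (\<bar>Z x\<bar> ^ q) + ennreal c2"
        proof -
          have "ennreal c1 * ennreal (\<bar>Z x\<bar> ^ q) + ennreal c2 = ennreal (c1 * \<bar>Z x\<bar> ^ q + c2)"
            using c1 c2 by (simp add: ennreal_mult')
          then show ?thesis using \<open>\<bar>Z x\<bar> ^ i \<le> c1 * \<bar>Z x\<bar> ^ q + c2\<close> by (simp add: ennreal_leI)
        qed
      qed
      also have "\<dots> = ennreal c1 * abs_moment M q Z + ennreal c2"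
        using Zm by (simp add: nn_integral_add nn_integral_cmult abs_moment_def emeasure_space_1)
      also have "\<dots> = ennreal (c1 * r + c2)"
        using c1 c2 r0 mr by (simp add: ennreal_mult')
      also have "c1 * r + c2 = s ^ i"
        using sq s q rpos by (simp add: c1_def c2_def field_simps)
      also have "ennreal (s ^ i) = Lq_norm M q Z ^ i"
        using L s by (simp add: s_def ennreal_power)
      finally show ?thesis .
    qed
  qed
qed



lemma tri_expand:
  fixes a b c :: "'a::comm_semiring_1"
  shows "(a + b + c) ^ p = (\<Sum>k\<le>p. \<Sum>i\<le>k. of_nat (p choose k) * of_nat (k choose i) * (a ^ i * b ^ (k - i) * c ^ (p - k)))"
proof -
  have "(a + b + c) ^ p = (\<Sum>k\<le>p. of_nat (p choose k) * (a + b) ^ k * c ^ (p - k))"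
    by (rule binomial_ring)
  also have "\<dots> = (\<Sum>k\<le>p. of_nat (p choose k) * (\<Sum>i\<le>k. of_nat (k choose i) * a ^ i * b ^ (k - i)) * c ^ (p - k))"
    by (simp add: binomial_ring)
  also have "\<dots> = (\<Sum>k\<le>p. \<Sum>i\<le>k. of_nat (p choose k) * of_nat (k choose i) * (a ^ i * b ^ (k - i) * c ^ (p - k)))"
    by (simp add: sum_distrib_left sum_distrib_right ac_simps)
  finally show ?thesis .
qed

lemma comb:
  fixes m0 m1 m2 :: "nat \<Rightarrow> ennreal" and a b c :: ennreal
  assumes p: "p \<ge> 2" and z: "m0 0 = 1" "m1 0 = 1" "m2 0 = 1"
    and b0: "\<And>n. n \<le> p - 1 \<Longrightarrow> m0 n \<le> a ^ n"
    and b1: "\<And>n. n \<le> p - 1 \<Longrightarrow> m1 n \<le> b ^ n"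
    and b2: "\<And>n. n \<le> p \<Longrightarrow> m2 n \<le> c ^ n"
  shows "(\<Sum>k\<le>p. \<Sum>i\<le>k. of_nat (p choose k) * of_nat (k choose i) * (m0 i * m1 (k - i) * m2 (p - k)))
         \<le> m0 p + m1 p + (a + b + c) ^ p"
proof -
  define F where "F k i = (if k = p \<and> i = p then m0 p else 0) + (if k = p \<and> i = 0 then m1 p else 0)
      + of_nat (p choose k) * of_nat (k choose i) * (a ^ i * b ^ (k - i) * c ^ (p - k))" for k i
  have le: "of_nat (p choose k) * of_nat (k choose i) * (m0 i * m1 (k - i) * m2 (p - k)) \<le> F k i"
    if "k \<le> p" "i \<le> k" for k i
  proof -
    consider "k = p \<and> i = p" | "k = p \<and> i = 0" | "\<not> (k = p \<and> i = p)" "\<not> (k = p \<and> i = 0)" by blast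
    then show ?thesis
    proof cases
      case 1 then show ?thesis using z p by (simp add: F_def)
    next
      case 2 then show ?thesis using z p by (simp add: F_def)
    next
      case 3
      have "i \<le> p - 1" using 3 that by auto
      moreover have "k - i \<le> p - 1" using 3 that by auto
      ultimately have "m0 i * m1 (k - i) * m2 (p - k) \<le> a ^ i * b ^ (k - i) * c ^ (p - k)"
        using b0 b1 b2 by (intro mult_mono) auto
      then have ineq: "of_nat (p choose k) * of_nat (k choose i) * (m0 i * m1 (k - i) * m2 (p - k))
          \<le> of_nat (p choose k) * of_nat (k choose i) * (a ^ i * b ^ (k - i) * c ^ (p - k))"
        by (intro mult_left_mono) auto
      have Feq: "F k i = of_nat (p choose k) * of_nat (k choose i) * (a ^ i * b ^ (k - i) * c ^ (p - k))"
        unfolding F_def by (simp only: if_not_P[OF 3(1)] if_not_P[OF 3(2)] add_0_left)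
      show ?thesis unfolding Feq by (rule ineq)
    qed
  qed
  have "(\<Sum>k\<le>p. \<Sum>i\<le>k. of_nat (p choose k) * of_nat (k choose i) * (m0 i * m1 (k - i) * m2 (p - k)))
      \<le> (\<Sum>k\<le>p. \<Sum>i\<le>k. F k i)"
    by (intro sum_mono) (use le in auto)
  also have "\<dots> = (\<Sum>k\<le>p. \<Sum>i\<le>k. (if k = p \<and> i = p then m0 p else 0))
      + (\<Sum>k\<le>p. \<Sum>i\<le>k. (if k = p \<and> i = 0 then m1 p else 0)) + (a + b + c) ^ p"
    by (simp add: F_def sum.distrib tri_expand)
  also have "(\<Sum>k\<le>p. \<Sum>i\<le>k. (if k = p \<and> i = p then m0 p else 0)) = m0 p"
  proof -
    have "(\<Sum>k\<le>p. \<Sum>i\<le>k. (if k = p \<and> i = p then m0 p else 0)) = (\<Sum>k\<le>p. if k = p then m0 p else 0)"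
      by (intro sum.cong refl) auto
    then show ?thesis by simp
  qed
  also have "(\<Sum>k\<le>p. \<Sum>i\<le>k. (if k = p \<and> i = 0 then m1 p else 0)) = m1 p"
  proof -
    have "(\<Sum>k\<le>p. \<Sum>i\<le>k. (if k = p \<and> i = 0 then m1 p else 0)) = (\<Sum>k\<le>p. if k = p then m1 p else 0)"
      by (intro sum.cong refl) auto
    then show ?thesis by simp
  qed
  finally show ?thesis .
qed

theorem lemma3p2:
  fixes M :: "'a measure" and Z :: "nat \<Rightarrow> 'a \<Rightarrow> real" and p :: nat
  assumes "prob_space M"
    and "prob_space.indep_vars M (\<lambda>_. borel) Z {0, 1, 2}"
    and "p \<ge> 2"
  shows "abs_moment M p (\<lambda>x. Z 0 x + Z 1 x + Z 2 x)
     \<le> abs_moment M p (Z 0) + abs_moment M p (Z 1)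
       + (Lq_norm M (p - 1) (Z 0) + Lq_norm M (p - 1) (Z 1) + Lq_norm M p (Z 2)) ^ p"
proof -
  interpret prob_space M by (rule assms(1))
  have ind: "indep_vars (\<lambda>_. borel) Z {0, 1, 2}" by (rule assms(2))
  have meas: "Z j \<in> borel_measurable M" if "j \<in> {0, 1, 2}" for j
    using ind that unfolding indep_vars_def by auto
  have m0: "Z 0 \<in> borel_measurable M" by (rule meas) simp
  have m1: "Z 1 \<in> borel_measurable M" by (rule meas) simp
  have m2: "Z 2 \<in> borel_measurable M" by (rule meas) simp
  define mom where "mom j n = abs_moment M n (Z j)" for j n
  define T where "T k i x = ennreal (\<bar>Z 0 x\<bar> ^ i) * ennreal (\<bar>Z 1 x\<bar> ^ (k - i)) * ennreal (\<bar>Z 2 x\<bar> ^ (p - k))"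
    for k i x
  have Tm: "T k i \<in> borel_measurable M" for k i
    unfolding T_def using m0 m1 m2
    by (intro borel_measurable_times_ennreal measurable_compose[OF _ measurable_ennreal]
        borel_measurable_power borel_measurable_abs)
  have pt: "ennreal (\<bar>Z 0 x + Z 1 x + Z 2 x\<bar> ^ p)
      \<le> (\<Sum>k\<le>p. \<Sum>i\<le>k. of_nat (p choose k) * of_nat (k choose i) * T k i x)" for x
  proof -
    have "\<bar>Z 0 x + Z 1 x + Z 2 x\<bar> ^ p \<le> (\<bar>Z 0 x\<bar> + \<bar>Z 1 x\<bar> + \<bar>Z 2 x\<bar>) ^ p"
      by (intro power_mono) (auto intro: order.trans[OF abs_triangle_ineq] add_mono)
    then have "ennreal (\<bar>Z 0 x + Z 1 x + Z 2 x\<bar> ^ p) \<le> ennreal ((\<bar>Z 0 x\<bar> + \<bar>Z 1 x\<bar> + \<bar>Z 2 x\<bar>) ^ p)"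
      by (rule ennreal_leI)
    also have "\<dots> = (ennreal \<bar>Z 0 x\<bar> + ennreal \<bar>Z 1 x\<bar> + ennreal \<bar>Z 2 x\<bar>) ^ p"
      by (subst ennreal_power[symmetric]) auto
    also have "\<dots> = (\<Sum>k\<le>p. \<Sum>i\<le>k. of_nat (p choose k) * of_nat (k choose i) *
        (ennreal \<bar>Z 0 x\<bar> ^ i * ennreal \<bar>Z 1 x\<bar> ^ (k - i) * ennreal \<bar>Z 2 x\<bar> ^ (p - k)))"
      by (rule tri_expand)
    also have "\<dots> = (\<Sum>k\<le>p. \<Sum>i\<le>k. of_nat (p choose k) * of_nat (k choose i) * T k i x)"
      by (simp add: T_def ennreal_power)
    finally show ?thesis .
  qed
  have indT: "(\<integral>\<^sup>+ x. T k i x \<partial>M) = mom 0 i * mom 1 (k - i) * mom 2 (p - k)" for k i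
  proof -
    define e where "e n = (if n = (0::nat) then i else if n = 1 then k - i else p - k)" for n
    define X where "X n x = ennreal (\<bar>Z n x\<bar> ^ e n)" for n x
    have indX: "indep_vars (\<lambda>_. borel) X {0, 1, 2}"
      unfolding X_def
      by (rule indep_vars_compose2[OF ind, where Y="\<lambda>n t. ennreal (\<bar>t\<bar> ^ e n)"]) measurable
    have "(\<integral>\<^sup>+ x. (\<Prod>n\<in>{0, 1, 2}. X n x) \<partial>M) = (\<Prod>n\<in>{0, 1, 2}. \<integral>\<^sup>+ x. X n x \<partial>M)"
      by (rule indep_vars_nn_integral) (use indX in auto)
    moreover have "(\<Prod>n\<in>{0::nat, 1, 2}. X n x) = T k i x" for x
      by (simp add: X_def e_def T_def mult.assoc)
    moreover have "(\<Prod>n\<in>{0::nat, 1, 2}. \<integral>\<^sup>+ x. X n x \<partial>M) = mom 0 i * mom 1 (k - i) * mom 2 (p - k)"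
      by (simp add: X_def e_def mom_def abs_moment_def mult.assoc)
    ultimately show ?thesis by simp
  qed
  have "abs_moment M p (\<lambda>x. Z 0 x + Z 1 x + Z 2 x)
      \<le> (\<integral>\<^sup>+ x. (\<Sum>k\<le>p. \<Sum>i\<le>k. of_nat (p choose k) * of_nat (k choose i) * T k i x) \<partial>M)"
    unfolding abs_moment_def by (intro nn_integral_mono pt)
  also have "\<dots> = (\<Sum>k\<le>p. \<Sum>i\<le>k. of_nat (p choose k) * of_nat (k choose i) * (\<integral>\<^sup>+ x. T k i x \<partial>M))"
    using Tm by (simp add: nn_integral_sum nn_integral_cmult)
  also have "\<dots> = (\<Sum>k\<le>p. \<Sum>i\<le>k. of_nat (p choose k) * of_nat (k choose i) * (mom 0 i * mom 1 (k - i) * mom 2 (p - k)))"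
    by (simp add: indT)
  also have "\<dots> \<le> mom 0 p + mom 1 p + (Lq_norm M (p - 1) (Z 0) + Lq_norm M (p - 1) (Z 1) + Lq_norm M p (Z 2)) ^ p"
  proof (rule comb)
    show "2 \<le> p" by (rule assms(3))
    show "mom 0 0 = 1" "mom 1 0 = 1" "mom 2 0 = 1"
      by (simp_all add: mom_def abs_moment_def emeasure_space_1)
    show "mom 0 n \<le> Lq_norm M (p - 1) (Z 0) ^ n" if "n \<le> p - 1" for n
      unfolding mom_def by (rule lyap[OF assms(1) m0 that]) (use assms(3) in auto)
    show "mom 1 n \<le> Lq_norm M (p - 1) (Z 1) ^ n" if "n \<le> p - 1" for n
      unfolding mom_def by (rule lyap[OF assms(1) m1 that]) (use assms(3) in auto)
    show "mom 2 n \<le> Lq_norm M p (Z 2) ^ n" if "n \<le> p" for n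
      unfolding mom_def by (rule lyap[OF assms(1) m2 that]) (use assms(3) in auto)
  qed
  finally show ?thesis by (simp add: mom_def)
qed

end
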